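(* Let $r,d,\mu_C:[0,\infty)\to\mathbb{R}$ be Lipschitz continuous with $r(0)>d(0)>0$, $r'<0$, $r(+\infty)=0$, $d'>0$, and $\mu_C>0$, $\mu_C'<0$, $\mu_C(\infty)=0$. Take the constant dose $c\equiv 1$ and assume there is $x_c>0$ such that $$r(x)-d(x)-c\mu_C(x)<\overline{R_c}:=r(x_c)-d(x_c)-c\mu_C(x_c)\quad\text{for all } x\neq x_c,\qquad \overline{R_c}>0.$$ Let $n_C^0>0$ be an integrable initial datum on $[0,\infty)$ and $n_C$ the solution of $$\frac{\partial}{\partial t}n_C(x,t)=\big[r(x)-d(x)-c\,\mu_C(x)\big]n_C(x,t),\qquad n_C(x,0)=n_C^0(x)$$ (the cancer-cell model with no mutations, $\theta_C=0$). Set $\rho_C(t)=\int_0^\infty n_C(x,t)\,dx$. Then $\rho_C(t)\to\infty$ as $t\to\infty$ with an exponential rate, and $\dfrac{n_C(\cdot,t)}{\rho_C(t)}\to\delta(x-x_c)$ as $t\to\infty$, weakly in the sense of measures.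
   Context: $n_C(x,t)$ is the density of cancer cells with resistance-gene expression level $x\ge0$; $r$, $d$ are birth and death rates, $c$ the (constant) drug dose and $\mu_C(x)$ the drug-induced death rate of cancer cells with level $x$. $\delta(x-x_c)$ is the Dirac mass at $x_c$. *)

theory Defs
  imports "HOL-Analysis.Analysis"
begin

end

theory Submission imports Defs begin

lemma si_bounded:
  fixes f g :: "real \<Rightarrow> real"
  assumes f: "set_integrable lborel A f" and A: "A \<in> sets borel"
    and g: "continuous_on A g" and B: "\<forall>x\<in>A. \<bar>g x\<bar> \<le> B"
  shows "set_integrable lborel A (\<lambda>x. g x * f x)"
proof -
  have fi: "integrable lborel (\<lambda>x. indicator A x *\<^sub>R f x)" using f unfolding set_integrable_def .
  have m1: "(\<lambda>x. indicator A x *\<^sub>R g x) \<in> borel_measurable borel"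
    by (rule borel_measurable_continuous_on_indicator[OF A g])
  have m2: "(\<lambda>x. indicator A x *\<^sub>R f x) \<in> borel_measurable borel"
    using fi by (simp add: borel_measurable_integrable)
  have eq: "(\<lambda>x. indicator A x *\<^sub>R (g x * f x)) = (\<lambda>x. (indicator A x *\<^sub>R g x) * (indicator A x *\<^sub>R f x))"
    by (auto simp: indicator_def fun_eq_iff)
  show ?thesis unfolding set_integrable_def
  proof (rule Bochner_Integration.integrable_bound[where f="\<lambda>x. B *\<^sub>R (indicator A x *\<^sub>R f x)"])
    show "integrable lborel (\<lambda>x. B *\<^sub>R (indicator A x *\<^sub>R f x))" using fi by simp
    show "(\<lambda>x. indicator A x *\<^sub>R (g x * f x)) \<in> borel_measurable lborel"
      unfolding eq using m1 m2 by simp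
    show "AE x in lborel. norm (indicator A x *\<^sub>R (g x * f x)) \<le> norm (B *\<^sub>R (indicator A x *\<^sub>R f x))"
      using B by (intro AE_I2) (auto simp: indicator_def abs_mult intro!: mult_right_mono order.trans[OF _ abs_ge_self[of B]])
  qed
qed

lemma integral_pos_interval:
  fixes f :: "real \<Rightarrow> real" and a b :: real
  assumes f: "set_integrable lborel A f" and nn: "\<forall>x\<in>A. 0 \<le> f x"
    and sub: "{a<..<b} \<subseteq> A" and pos: "\<forall>x\<in>{a<..<b}. f x > 0" and ab: "a < b"
  shows "(LINT x:A|lborel. f x) > 0"
proof -
  have fi: "integrable lborel (\<lambda>x. indicator A x *\<^sub>R f x)" using f unfolding set_integrable_def .
  have nn2: "AE x in lborel. 0 \<le> indicator A x *\<^sub>R f x" using nn by (auto simp: indicator_def)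
  have ge: "(LINT x:A|lborel. f x) \<ge> 0" unfolding set_lebesgue_integral_def
    using nn2 by (simp add: integral_nonneg_AE)
  moreover have "(LINT x:A|lborel. f x) \<noteq> 0"
  proof
    assume "(LINT x:A|lborel. f x) = 0"
    then have "AE x in lborel. indicator A x *\<^sub>R f x = 0"
      using integral_nonneg_eq_0_iff_AE[OF fi nn2] unfolding set_lebesgue_integral_def by simp
    then have "AE x in lborel. x \<notin> {a<..<b}"
      by eventually_elim (use sub pos in \<open>force simp: indicator_def split: if_splits\<close>)
    then have "emeasure lborel {a<..<b} = 0"
      by (subst (asm) AE_iff_measurable[of "{a<..<b}"]) auto
    with ab show False by simp
  qed
  ultimately show ?thesis by simp
qed

lemma explim: "(a::real) > 0 \<Longrightarrow> filterlim (\<lambda>t. exp (a * t)) at_top at_top"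
  by (rule filterlim_compose[OF exp_at_top filterlim_tendsto_pos_mult_at_top[OF tendsto_const _ filterlim_ident]])

theorem lemma2p3:
  fixes r d mu n0 :: "real \<Rightarrow> real" and n :: "real \<Rightarrow> real \<Rightarrow> real"
    and c xc :: real
  assumes r_lip: "\<exists>L. L-lipschitz_on {0..} r"
    and d_lip: "\<exists>L. L-lipschitz_on {0..} d"
    and mu_lip: "\<exists>L. L-lipschitz_on {0..} mu"
    and r0_d0: "r 0 > d 0" and d0_pos: "d 0 > 0"
    and r_deriv: "\<forall>x\<ge>0. \<exists>D. (r has_real_derivative D) (at x within {0..}) \<and> D < 0"
    and r_inf: "(r \<longlongrightarrow> 0) at_top"
    and d_deriv: "\<forall>x\<ge>0. \<exists>D. (d has_real_derivative D) (at x within {0..}) \<and> D > 0"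
    and mu_pos: "\<forall>x\<ge>0. mu x > 0"
    and mu_deriv: "\<forall>x\<ge>0. \<exists>D. (mu has_real_derivative D) (at x within {0..}) \<and> D < 0"
    and mu_inf: "(mu \<longlongrightarrow> 0) at_top"
    and c_def: "c = 1"
    and xc_pos: "xc > 0"
    and xc_max: "\<forall>x\<ge>0. x \<noteq> xc \<longrightarrow> r x - d x - c * mu x < r xc - d xc - c * mu xc"
    and Rc_pos: "r xc - d xc - c * mu xc > 0"
    and n0_pos: "\<forall>x\<ge>0. n0 x > 0"
    and n0_int: "set_integrable lborel {0..} n0"
    and n_init: "\<forall>x\<ge>0. n x 0 = n0 x"
    and n_ode: "\<forall>x\<ge>0. \<forall>t\<ge>0. ((\<lambda>s. n x s) has_real_derivative
                   (r x - d x - c * mu x) * n x t) (at t within {0..})"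
  shows "filterlim (\<lambda>t. LINT x:{0..}|lborel. n x t) at_top at_top
    \<and> (\<exists>a>0. \<exists>C>0. \<forall>\<^sub>F t in at_top. C * exp (a * t) \<le> (LINT x:{0..}|lborel. n x t))
    \<and> (\<forall>\<phi>::real \<Rightarrow> real. continuous_on {0..} \<phi> \<longrightarrow> bounded (\<phi> ` {0..}) \<longrightarrow>
         ((\<lambda>t. (LINT x:{0..}|lborel. \<phi> x * n x t) / (LINT x:{0..}|lborel. n x t))
            \<longlongrightarrow> \<phi> xc) at_top)"
proof -
  define R where "R x = r x - d x - c * mu x" for x
  define Rc where "Rc = R xc"
  have Rcpos: "Rc > 0" using Rc_pos by (simp add: Rc_def R_def)
  have Rle: "\<forall>x\<ge>0. R x \<le> Rc" using xc_max by (force simp: Rc_def R_def)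
  have Rcont: "continuous_on {0..} R"
  proof -
    obtain L1 L2 L3 where "L1-lipschitz_on {0..} r" "L2-lipschitz_on {0..} d" "L3-lipschitz_on {0..} mu"
      using r_lip d_lip mu_lip by blast
    then have "continuous_on {0..} r" "continuous_on {0..} d" "continuous_on {0..} mu"
      using lipschitz_on_continuous_on by blast+
    then show ?thesis unfolding R_def[abs_def] by (intro continuous_intros)
  qed
  have sol: "\<forall>x\<ge>0. \<forall>t\<ge>0. n x t = exp (R x * t) * n0 x"
  proof (intro allI impI)
    fix x t :: real assume x: "x \<ge> 0" and t: "t \<ge> 0"
    define g where "g s = n x s * exp (- (R x) * s)" for s
    have "\<exists>k. \<forall>s\<in>{0..}. g s = k"
    proof (rule has_field_derivative_zero_constant)
      show "convex {0::real..}" by simp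
      fix s :: real assume s: "s \<in> {0..}"
      have "((\<lambda>s. n x s) has_real_derivative (r x - d x - c * mu x) * n x s) (at s within {0..})"
        using n_ode x s by auto
      then have "(g has_real_derivative (R x * n x s) * exp (- (R x) * s) + n x s * (exp (- (R x) * s) * (- R x))) (at s within {0..})"
        unfolding g_def R_def by (auto intro!: derivative_eq_intros)
      then show "(g has_real_derivative 0) (at s within {0..})" by (simp add: algebra_simps)
    qed
    then obtain k where k: "\<forall>s\<in>{0..}. g s = k" by blast
    have "g t = g 0" using k t by auto
    then have "n x t * exp (- (R x) * t) = n0 x" using n_init x by (simp add: g_def)
    then have "n x t = n0 x * exp (R x * t)"
      by (metis exp_minus_inverse mult.assoc mult.commute mult.right_neutral mult_minus_left)
    then show "n x t = exp (R x * t) * n0 x" by simp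
  qed
  have dmono: "\<forall>x\<ge>0. d 0 \<le> d x"
  proof (intro allI impI)
    fix x :: real assume x: "x \<ge> 0"
    have "\<forall>y. \<exists>D. y \<ge> 0 \<longrightarrow> (d has_real_derivative D) (at y within {0..}) \<and> D > 0"
      using d_deriv by blast
    from choice[OF this] obtain D where D: "\<forall>y\<ge>0. (d has_real_derivative D y) (at y within {0..}) \<and> D y > 0"
      by blast
    have "\<exists>z\<in>{0..x}. d x - d 0 = (\<lambda>h. D z * h) (x - 0)"
    proof (rule mvt_very_simple[OF x])
      fix y assume "0 \<le> y" "y \<le> x"
      then have "(d has_real_derivative D y) (at y within {0..x})"
        using D by (auto intro: DERIV_subset)
      then show "(d has_derivative (\<lambda>h. D y * h)) (at y within {0..x})"
        by (simp add: has_field_derivative_imp_has_derivative)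
    qed
    then obtain z where "z \<in> {0..x}" "d x - d 0 = D z * x" by auto
    moreover have "D z > 0" using D \<open>z \<in> {0..x}\<close> by auto
    moreover have "D z * x \<ge> 0" using \<open>D z > 0\<close> x by simp
    ultimately show "d 0 \<le> d x" by linarith
  qed
  have far: "\<exists>m<Rc. \<forall>x\<ge>0. \<delta> \<le> \<bar>x - xc\<bar> \<longrightarrow> R x \<le> m" if \<delta>: "\<delta> > 0" for \<delta>
  proof -
    have "\<forall>\<^sub>F x in at_top. r x < d 0 / 2" using r_inf d0_pos by (intro order_tendstoD) auto
    then obtain M where M: "\<forall>x\<ge>M. r x < d 0 / 2" by (auto simp: eventually_at_top_linorder)
    have big: "R x \<le> - d 0 / 2" if "x \<ge> M" "x \<ge> 0" for x
    proof -
      have "r x < d 0 / 2" "d 0 \<le> d x" "mu x > 0" using M dmono mu_pos that by auto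
      then show ?thesis unfolding R_def c_def by linarith
    qed
    define K where "K = {0..max M 0} \<inter> {x. \<delta> \<le> \<bar>x - xc\<bar>}"
    have Kc: "compact K" unfolding K_def
      by (intro compact_Int_closed compact_Icc closed_Collect_le continuous_intros)
    show ?thesis
    proof (cases "K = {}")
      case True
      show ?thesis
      proof (intro exI[of _ "- d 0 / 2"] conjI allI impI)
        show "- d 0 / 2 < Rc" using Rcpos d0_pos by simp
        fix x :: real assume "x \<ge> 0" "\<delta> \<le> \<bar>x - xc\<bar>"
        have "x \<notin> K" using True by simp
        then have "\<not> x \<le> max M 0" using \<open>x \<ge> 0\<close> \<open>\<delta> \<le> \<bar>x - xc\<bar>\<close> by (simp add: K_def)
        then have "x \<ge> M" by simp
        then show "R x \<le> - d 0 / 2" using big \<open>x \<ge> 0\<close> by blast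
      qed
    next
      case False
      have "K \<subseteq> {0..}" unfolding K_def by auto
      then have KR: "continuous_on K R" using Rcont continuous_on_subset by blast
      obtain x0 where x0: "x0 \<in> K" "\<forall>y\<in>K. R y \<le> R x0"
        using continuous_attains_sup[OF Kc False KR] by blast
      have "\<delta> \<le> \<bar>x0 - xc\<bar>" "x0 \<ge> 0" using x0(1) by (simp_all add: K_def)
      then have "x0 \<noteq> xc" "x0 \<ge> 0" using \<delta> by auto
      then have "R x0 < Rc" using xc_max unfolding Rc_def R_def by blast
      show ?thesis
      proof (intro exI[of _ "max (R x0) (- d 0 / 2)"] conjI allI impI)
        show "max (R x0) (- d 0 / 2) < Rc" using Rcpos d0_pos \<open>R x0 < Rc\<close> by simp
        fix x :: real assume x: "x \<ge> 0" "\<delta> \<le> \<bar>x - xc\<bar>"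
        show "R x \<le> max (R x0) (- d 0 / 2)"
        proof (cases "x \<le> max M 0")
          case True then have "x \<in> K" using x by (auto simp: K_def)
          then show ?thesis using x0(2) by (meson max.coboundedI1)
        next
          case False then have "x \<ge> M" by simp
          then show ?thesis using big[of x] x by simp
        qed
      qed
    qed
  qed
  have intE: "set_integrable lborel {0..} (\<lambda>x. exp (R x * t) * n0 x)" if t: "t \<ge> 0" for t
  proof (rule si_bounded[OF n0_int, where B="exp (Rc * t)"])
    show "continuous_on {0..} (\<lambda>x. exp (R x * t))" using Rcont by (intro continuous_intros)
    show "\<forall>x\<in>{0..}. \<bar>exp (R x * t)\<bar> \<le> exp (Rc * t)" using Rle t by (auto intro: mult_right_mono)
  qed simp
  have near: "\<exists>J>0. \<forall>t\<ge>0. J * exp (\<beta> * t) \<le> (LINT x:{0..}|lborel. exp (R x * t) * n0 x)"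
    if \<beta>: "\<beta> < Rc" for \<beta>
  proof -
    have "xc \<in> {0..}" using xc_pos by simp
    then obtain \<delta>0 where \<delta>0: "\<delta>0 > 0" "\<forall>x\<in>{0..}. dist x xc < \<delta>0 \<longrightarrow> dist (R x) (R xc) < Rc - \<beta>"
      using Rcont \<beta> unfolding continuous_on_iff by (metis diff_gt_0_iff_gt)
    define \<delta> where "\<delta> = min \<delta>0 xc"
    have \<delta>pos: "\<delta> > 0" using \<delta>0 xc_pos by (simp add: \<delta>_def)
    have Rbig: "R x > \<beta>" if "\<bar>x - xc\<bar> < \<delta>" for x
    proof -
      have "x \<ge> 0" "dist x xc < \<delta>0" using that by (auto simp: \<delta>_def dist_real_def)
      then have "\<bar>R x - Rc\<bar> < Rc - \<beta>" using \<delta>0 by (auto simp: dist_real_def Rc_def)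
      then show ?thesis by simp
    qed
    define \<psi> where "\<psi> x = max 0 (1 - \<bar>x - xc\<bar> / \<delta>)" for x
    have \<psi>int: "set_integrable lborel {0..} (\<lambda>x. \<psi> x * n0 x)"
    proof (rule si_bounded[OF n0_int, where B=1])
      show "continuous_on {0..} \<psi>" unfolding \<psi>_def[abs_def] using \<delta>pos by (intro continuous_intros) auto
      show "\<forall>x\<in>{0..}. \<bar>\<psi> x\<bar> \<le> 1" using \<delta>pos by (auto simp: \<psi>_def)
    qed simp
    define J where "J = (LINT x:{0..}|lborel. \<psi> x * n0 x)"
    have Jpos: "J > 0" unfolding J_def
    proof (rule integral_pos_interval[OF \<psi>int, of "xc - \<delta>" "xc + \<delta>"])
      show "\<forall>x\<in>{0..}. 0 \<le> \<psi> x * n0 x" using n0_pos by (auto simp: \<psi>_def less_imp_le)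
      show "{xc - \<delta><..<xc + \<delta>} \<subseteq> {0..}" using \<delta>_def by auto
      show "\<forall>x\<in>{xc - \<delta><..<xc + \<delta>}. 0 < \<psi> x * n0 x"
      proof
        fix x assume x: "x \<in> {xc - \<delta><..<xc + \<delta>}"
        then have "\<bar>x - xc\<bar> < \<delta>" "x \<ge> 0" using \<delta>_def by auto
        then have "\<bar>x - xc\<bar> / \<delta> < 1" using \<delta>pos by simp
        then have "\<psi> x > 0" by (simp add: \<psi>_def)
        moreover have "n0 x > 0" using n0_pos \<open>x \<ge> 0\<close> by simp
        ultimately show "0 < \<psi> x * n0 x" by simp
      qed
      show "xc - \<delta> < xc + \<delta>" using \<delta>pos by simp
    qed
    show ?thesis
    proof (intro exI[of _ J] conjI allI impI Jpos)
      fix t :: real assume t: "t \<ge> 0"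
      have "J * exp (\<beta> * t) = (LINT x:{0..}|lborel. \<psi> x * n0 x * exp (\<beta> * t))"
        unfolding J_def by simp
      also have "\<dots> \<le> (LINT x:{0..}|lborel. exp (R x * t) * n0 x)"
      proof (rule set_integral_mono)
        show "set_integrable lborel {0..} (\<lambda>x. \<psi> x * n0 x * exp (\<beta> * t))"
          using \<psi>int by (simp add: set_integrable_mult_left)
        show "set_integrable lborel {0..} (\<lambda>x. exp (R x * t) * n0 x)" using intE t by blast
        fix x :: real assume x: "x \<in> {0..}"
        have n0p: "n0 x > 0" using n0_pos x by auto
        show "\<psi> x * n0 x * exp (\<beta> * t) \<le> exp (R x * t) * n0 x"
        proof (cases "\<bar>x - xc\<bar> < \<delta>")
          case True
          have "\<psi> x \<le> 1" "\<psi> x \<ge> 0" using \<delta>pos by (auto simp: \<psi>_def)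
          moreover have "exp (\<beta> * t) \<le> exp (R x * t)" using Rbig[OF True] t by (auto intro: mult_right_mono)
          ultimately have "\<psi> x * exp (\<beta> * t) \<le> exp (R x * t)"
            by (meson exp_ge_zero mult_left_le_one_le order.trans)
          then show ?thesis using n0p by (simp add: mult.commute mult.left_commute mult_le_cancel_left_pos)
        next
          case False then have "\<psi> x = 0" using \<delta>pos by (auto simp: \<psi>_def)
          then show ?thesis using n0p by simp
        qed
      qed
      finally show "J * exp (\<beta> * t) \<le> (LINT x:{0..}|lborel. exp (R x * t) * n0 x)" .
    qed
  qed
  have rho_eq: "(LINT x:{0..}|lborel. n x t) = (LINT x:{0..}|lborel. exp (R x * t) * n0 x)" if "t \<ge> 0" for t
    using sol that by (intro set_lebesgue_integral_cong) auto
  have ev0: "\<forall>\<^sub>F t in at_top. (t::real) \<ge> 0" by (rule eventually_ge_at_top)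
  obtain J where J: "J > 0" "\<forall>t\<ge>0. J * exp (Rc / 2 * t) \<le> (LINT x:{0..}|lborel. exp (R x * t) * n0 x)"
    using near[of "Rc / 2"] Rcpos by auto
  have growth: "\<forall>\<^sub>F t in at_top. J * exp (Rc / 2 * t) \<le> (LINT x:{0..}|lborel. n x t)"
    using ev0 by eventually_elim (use J rho_eq in auto)
  have lim1: "filterlim (\<lambda>t. J * exp (Rc / 2 * t)) at_top at_top"
    using J(1) Rcpos by (intro filterlim_tendsto_pos_mult_at_top[OF tendsto_const] explim) auto
  have P1: "filterlim (\<lambda>t. LINT x:{0..}|lborel. n x t) at_top at_top"
    by (rule filterlim_at_top_mono[OF lim1 growth])
  have P2: "\<exists>a>0. \<exists>C>0. \<forall>\<^sub>F t in at_top. C * exp (a * t) \<le> (LINT x:{0..}|lborel. n x t)"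
    using growth J(1) Rcpos by (intro exI[of _ "Rc/2"] exI[of _ J]) auto
  have P3: "((\<lambda>t. (LINT x:{0..}|lborel. \<phi> x * n x t) / (LINT x:{0..}|lborel. n x t)) \<longlongrightarrow> \<phi> xc) at_top"
    if \<phi>c: "continuous_on {0..} \<phi>" and \<phi>b: "bounded (\<phi> ` {0..})" for \<phi> :: "real \<Rightarrow> real"
  proof -
    obtain B where B: "\<forall>x\<ge>0. \<bar>\<phi> x\<bar> \<le> B" using \<phi>b unfolding bounded_iff by auto
    have B0: "B \<ge> 0" using B xc_pos by (meson abs_ge_zero less_imp_le order.trans)
    show ?thesis unfolding tendsto_iff
    proof (intro allI impI)
      fix e :: real assume e: "e > 0"
      have "xc \<in> {0..}" using xc_pos by simp
      then obtain \<delta> where \<delta>: "\<delta> > 0" "\<forall>x\<in>{0..}. dist x xc < \<delta> \<longrightarrow> dist (\<phi> x) (\<phi> xc) < e/2"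
        using \<phi>c e unfolding continuous_on_iff by (metis half_gt_zero)
      obtain m where m: "m < Rc" "\<forall>x\<ge>0. \<delta> \<le> \<bar>x - xc\<bar> \<longrightarrow> R x \<le> m" using far[OF \<delta>(1)] by blast
      define \<beta> where "\<beta> = (m + Rc) / 2"
      obtain J where J: "J > 0" "\<forall>t\<ge>0. J * exp (\<beta> * t) \<le> (LINT x:{0..}|lborel. exp (R x * t) * n0 x)"
        using near[of \<beta>] m by (auto simp: \<beta>_def)
      define I0 where "I0 = (LINT x:{0..}|lborel. n0 x)"
      define X where "X = e / 2 * J"
      have Xpos: "X > 0" using e J by (simp add: X_def)
      have lim2: "filterlim (\<lambda>t. exp ((\<beta> - m) * t)) at_top at_top"
        using m by (intro explim) (simp add: \<beta>_def)
      have evb: "\<forall>\<^sub>F t in at_top. exp ((\<beta> - m) * t) \<ge> 2 * B * I0 / X + 1"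
        using lim2 by (simp add: filterlim_at_top)
      show "\<forall>\<^sub>F t in at_top. dist ((LINT x:{0..}|lborel. \<phi> x * n x t) / (LINT x:{0..}|lborel. n x t)) (\<phi> xc) < e"
        using evb ev0
      proof eventually_elim
        case (elim t)
        have t: "t \<ge> 0" using elim by simp
        define \<rho> where "\<rho> = (LINT x:{0..}|lborel. exp (R x * t) * n0 x)"
        define N where "N = (LINT x:{0..}|lborel. (\<phi> x * exp (R x * t)) * n0 x)"
        define K where "K = 2 * B * exp (m * t)"
        have Nint: "set_integrable lborel {0..} (\<lambda>x. (\<phi> x * exp (R x * t)) * n0 x)"
        proof (rule si_bounded[OF n0_int, where B="B * exp (Rc * t)"])
          show "continuous_on {0..} (\<lambda>x. \<phi> x * exp (R x * t))"
            using Rcont \<phi>c by (intro continuous_intros)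
          show "\<forall>x\<in>{0..}. \<bar>\<phi> x * exp (R x * t)\<bar> \<le> B * exp (Rc * t)"
            using Rle t B by (auto simp: abs_mult intro!: mult_mono mult_right_mono)
        qed simp
        have Eint: "set_integrable lborel {0..} (\<lambda>x. exp (R x * t) * n0 x)" using intE t by blast
        have pw: "\<bar>(\<phi> x - \<phi> xc) * exp (R x * t)\<bar> \<le> e / 2 * exp (R x * t) + K" if x: "x \<ge> 0" for x
        proof (cases "\<bar>x - xc\<bar> < \<delta>")
          case True
          then have "\<bar>\<phi> x - \<phi> xc\<bar> \<le> e / 2" using \<delta> x by (auto simp: dist_real_def)
          then have "\<bar>(\<phi> x - \<phi> xc) * exp (R x * t)\<bar> \<le> e / 2 * exp (R x * t)"
            by (simp add: abs_mult mult_right_mono)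
          moreover have "K \<ge> 0" using B0 by (simp add: K_def)
          ultimately show ?thesis by linarith
        next
          case False
          then have "R x \<le> m" using m x by auto
          then have "exp (R x * t) \<le> exp (m * t)" using t by (auto intro: mult_right_mono)
          moreover have "\<bar>\<phi> x - \<phi> xc\<bar> \<le> 2 * B" using B x xc_pos
            by (smt (verit))
          ultimately have "\<bar>(\<phi> x - \<phi> xc) * exp (R x * t)\<bar> \<le> K"
            unfolding K_def abs_mult by (auto intro!: mult_mono)
          moreover have "e / 2 * exp (R x * t) \<ge> 0" using e by simp
          ultimately show ?thesis by linarith
        qed
        have up: "N \<le> (\<phi> xc + e / 2) * \<rho> + K * I0"
        proof -
          have "N \<le> (LINT x:{0..}|lborel. (\<phi> xc + e / 2) * (exp (R x * t) * n0 x) + K * n0 x)"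
            unfolding N_def
          proof (rule set_integral_mono[OF Nint])
            show "set_integrable lborel {0..} (\<lambda>x. (\<phi> xc + e / 2) * (exp (R x * t) * n0 x) + K * n0 x)"
              using Eint n0_int by (intro set_integral_add set_integrable_mult_right)
            fix x :: real assume "x \<in> {0..}"
            then have x: "x \<ge> 0" by simp
            have "(\<phi> x - \<phi> xc) * exp (R x * t) * n0 x \<le> (e / 2 * exp (R x * t) + K) * n0 x"
              using pw[OF x] n0_pos x by (intro mult_right_mono) auto
            then show "\<phi> x * exp (R x * t) * n0 x \<le> (\<phi> xc + e / 2) * (exp (R x * t) * n0 x) + K * n0 x"
              by (simp add: algebra_simps)
          qed
          also have "\<dots> = (\<phi> xc + e / 2) * \<rho> + K * I0"
            using Eint n0_int by (simp add: set_integral_add set_integrable_mult_right \<rho>_def I0_def)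
          finally show ?thesis .
        qed
        have lo: "(\<phi> xc - e / 2) * \<rho> - K * I0 \<le> N"
        proof -
          have "(LINT x:{0..}|lborel. (\<phi> xc - e / 2) * (exp (R x * t) * n0 x) - K * n0 x) \<le> N"
            unfolding N_def
          proof (rule set_integral_mono[OF _ Nint])
            show "set_integrable lborel {0..} (\<lambda>x. (\<phi> xc - e / 2) * (exp (R x * t) * n0 x) - K * n0 x)"
              using Eint n0_int by (intro set_integral_diff set_integrable_mult_right)
            fix x :: real assume "x \<in> {0..}"
            then have x: "x \<ge> 0" by simp
            have "- ((\<phi> x - \<phi> xc) * exp (R x * t)) * n0 x \<le> (e / 2 * exp (R x * t) + K) * n0 x"
              using pw[OF x] n0_pos x by (intro mult_right_mono) auto
            then show "(\<phi> xc - e / 2) * (exp (R x * t) * n0 x) - K * n0 x \<le> \<phi> x * exp (R x * t) * n0 x"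
              by (simp add: algebra_simps)
          qed
          also have "(LINT x:{0..}|lborel. (\<phi> xc - e / 2) * (exp (R x * t) * n0 x) - K * n0 x) = (\<phi> xc - e / 2) * \<rho> - K * I0"
            using Eint n0_int by (simp add: set_integral_diff set_integrable_mult_right \<rho>_def I0_def)
          finally show ?thesis .
        qed
        have rhoJ: "J * exp (\<beta> * t) \<le> \<rho>" using J t by (simp add: \<rho>_def)
        have rpos: "\<rho> > 0" using rhoJ J(1) by (smt (verit) exp_gt_zero mult_pos_pos)
        have ebs: "exp (\<beta> * t) = exp ((\<beta> - m) * t) * exp (m * t)" by (simp add: exp_add[symmetric] algebra_simps)
        have "X * exp ((\<beta> - m) * t) \<ge> X * (2 * B * I0 / X + 1)"
          using elim Xpos by (simp add: mult_left_mono)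
        also have "X * (2 * B * I0 / X + 1) = 2 * B * I0 + X" using Xpos by (simp add: field_simps)
        finally have "2 * B * I0 < X * exp ((\<beta> - m) * t)" using Xpos by linarith
        then have "2 * B * I0 * exp (m * t) < X * exp ((\<beta> - m) * t) * exp (m * t)"
          by (simp add: mult_strict_right_mono)
        then have KI: "K * I0 < e / 2 * (J * exp (\<beta> * t))"
          unfolding K_def X_def ebs by (simp add: algebra_simps)
        have "e / 2 * (J * exp (\<beta> * t)) \<le> e / 2 * \<rho>" using rhoJ e by simp
        with KI up lo have abs: "\<bar>N - \<phi> xc * \<rho>\<bar> < e * \<rho>" by (simp add: algebra_simps abs_less_iff)
        have rho_eq': "(LINT x:{0..}|lborel. n x t) = \<rho>" using rho_eq t by (simp add: \<rho>_def)
        have N_eq: "(LINT x:{0..}|lborel. \<phi> x * n x t) = N" unfolding N_def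
          using sol t by (intro set_lebesgue_integral_cong) auto
        have "dist (N / \<rho>) (\<phi> xc) = \<bar>N - \<phi> xc * \<rho>\<bar> / \<rho>"
          using rpos by (simp add: dist_real_def field_simps)
        also have "\<dots> < e" using abs rpos by (simp add: pos_divide_less_eq)
        finally show ?case using rho_eq' N_eq by simp
      qed
    qed
  qed
  show ?thesis using P1 P2 P3 by blast
qed

end
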